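(* Let $G=G_1\ast\cdots\ast G_m\ast F_N$ be a countable group ($F_N$ free of finite rank), $\mathcal{F}=\{[G_1],\dots,[G_m]\}$, and $k\ge 1$ an integer. Let $T$ be a small minimal $(G,\mathcal{F})$-tree and $(T_n)_{n\in\mathbb{N}}$ a sequence of $k$-tame $(G,\mathcal{F})$-trees converging to $T$ in the equivariant Gromov–Hausdorff topology. Then $T$ is $k$-tame. (That is, the set of $k$-tame trees is closed in the space of small minimal $(G,\mathcal{F})$-trees.)
   Context: Peripheral: conjugate into some $G_i$. $(G,\mathcal{F})$-tree: $\mathbb{R}$-tree with isometric $G$-action in which every peripheral subgroup fixes a unique point. Small: arc stabilizers trivial or cyclic non-peripheral; minimal: no proper nonempty invariant subtree. $\mathrm{Fix}(g)$ is the fixed point set of $g$. A small minimal $(G,\mathcal{F})$-tree is $k$-tame if for every non-peripheral $g\in G$ and every $l\ge1$, $\mathrm{Fix}(g^l)\subseteq\mathrm{Fix}(g^k)$. Convergence $T_n\to T$ in the equivariant Gromov–Hausdorff topology: for every finite $K\subset T$, finite $P\subset G$, $\epsilon>0$, for all large $n$ there exist finite $K_n\subset T_n$ and $R\subseteq K\times K_n$ with surjective projections such that $|d_T(gx,hy)-d_{T_n}(gx',hy')|<\epsilon$ for all $(x,x'),(y,y')\in R$ and $g,h\in P$. *)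

theory Defs
  imports "HOL-Analysis.Analysis" "HOL-Algebra.Generated_Groups"
begin

definition reduced_word :: "('g, 'z) monoid_scheme \<Rightarrow> nat set \<Rightarrow> (nat \<Rightarrow> 'g set) \<Rightarrow> (nat \<times> 'g) list \<Rightarrow> bool" where
  "reduced_word G J H w \<longleftrightarrow>
     (\<forall>i < length w. fst (w ! i) \<in> J \<and> snd (w ! i) \<in> H (fst (w ! i)) \<and> snd (w ! i) \<noteq> \<one>\<^bsub>G\<^esub>) \<and>
     (\<forall>i. Suc i < length w \<longrightarrow> fst (w ! i) \<noteq> fst (w ! Suc i))"

definition word_prod :: "('g, 'z) monoid_scheme \<Rightarrow> (nat \<times> 'g) list \<Rightarrow> 'g" where
  "word_prod G w = foldr (\<lambda>p acc. snd p \<otimes>\<^bsub>G\<^esub> acc) w \<one>\<^bsub>G\<^esub>"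

definition is_free_product :: "('g, 'z) monoid_scheme \<Rightarrow> nat set \<Rightarrow> (nat \<Rightarrow> 'g set) \<Rightarrow> bool" where
  "is_free_product G J H \<longleftrightarrow> group G \<and> (\<forall>j\<in>J. subgroup (H j) G) \<and>
     bij_betw (word_prod G) {w. reduced_word G J H w} (carrier G)"

text \<open>G = G_0 * ... * G_(m-1) * F_N, where F_N is free on x 0, ..., x (N-1);
  equivalently G is the free product of the G_i and the infinite cyclic groups
  generated by the x j.\<close>

definition free_product_decomp :: "('g, 'z) monoid_scheme \<Rightarrow> (nat \<Rightarrow> 'g set) \<Rightarrow> nat \<Rightarrow> (nat \<Rightarrow> 'g) \<Rightarrow> nat \<Rightarrow> bool" where
  "free_product_decomp G Gs m x N \<longleftrightarrow> group G \<and>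
     (\<forall>j<N. x j \<in> carrier G \<and> (\<forall>n::nat. n > 0 \<longrightarrow> x j [^]\<^bsub>G\<^esub> n \<noteq> \<one>\<^bsub>G\<^esub>)) \<and>
     is_free_product G {..<m + N} (\<lambda>j. if j < m then Gs j else generate G {x (j - m)})"

definition conj_set :: "('g, 'z) monoid_scheme \<Rightarrow> 'g \<Rightarrow> 'g set \<Rightarrow> 'g set" where
  "conj_set G h A = (\<lambda>a. h \<otimes>\<^bsub>G\<^esub> a \<otimes>\<^bsub>G\<^esub> inv\<^bsub>G\<^esub> h) ` A"

definition peripheral_subgroups :: "('g, 'z) monoid_scheme \<Rightarrow> (nat \<Rightarrow> 'g set) \<Rightarrow> nat \<Rightarrow> 'g set set" where
  "peripheral_subgroups G Gs m = {conj_set G h (Gs i) | h i. h \<in> carrier G \<and> i < m}"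

definition peripheral_elem :: "('g, 'z) monoid_scheme \<Rightarrow> (nat \<Rightarrow> 'g set) \<Rightarrow> nat \<Rightarrow> 'g \<Rightarrow> bool" where
  "peripheral_elem G Gs m g \<longleftrightarrow> (\<exists>i<m. \<exists>h\<in>carrier G. h \<otimes>\<^bsub>G\<^esub> g \<otimes>\<^bsub>G\<^esub> inv\<^bsub>G\<^esub> h \<in> Gs i)"

definition peripheral_subgroup :: "('g, 'z) monoid_scheme \<Rightarrow> (nat \<Rightarrow> 'g set) \<Rightarrow> nat \<Rightarrow> 'g set \<Rightarrow> bool" where
  "peripheral_subgroup G Gs m A \<longleftrightarrow> (\<exists>i<m. \<exists>h\<in>carrier G. conj_set G h A \<subseteq> Gs i)"

definition geodesic_seg :: "'a set \<Rightarrow> ('a \<Rightarrow> 'a \<Rightarrow> real) \<Rightarrow> 'a \<Rightarrow> 'a \<Rightarrow> (real \<Rightarrow> 'a) \<Rightarrow> bool" where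
  "geodesic_seg S d x y \<gamma> \<longleftrightarrow> \<gamma> ` {0..d x y} \<subseteq> S \<and> \<gamma> 0 = x \<and> \<gamma> (d x y) = y \<and>
     (\<forall>s\<in>{0..d x y}. \<forall>t\<in>{0..d x y}. d (\<gamma> s) (\<gamma> t) = \<bar>s - t\<bar>)"

definition R_tree :: "'a set \<Rightarrow> ('a \<Rightarrow> 'a \<Rightarrow> real) \<Rightarrow> bool" where
  "R_tree S d \<longleftrightarrow> S \<noteq> {} \<and> Metric_space S d \<and>
     (\<forall>x\<in>S. \<forall>y\<in>S. \<exists>\<gamma>. geodesic_seg S d x y \<gamma> \<and>
        (\<forall>p. continuous_map (top_of_set {0..1::real}) (Metric_space.mtopology S d) p \<and>
             inj_on p {0..1} \<and> p 0 = x \<and> p 1 = y \<longrightarrow> p ` {0..1} = \<gamma> ` {0..d x y}))"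

text \<open>The segment [x,y] in an R-tree (the image of the unique arc).\<close>
definition segment :: "'a set \<Rightarrow> ('a \<Rightarrow> 'a \<Rightarrow> real) \<Rightarrow> 'a \<Rightarrow> 'a \<Rightarrow> 'a set" where
  "segment S d x y = {z \<in> S. d x z + d z y = d x y}"

definition isometric_action :: "('g, 'z) monoid_scheme \<Rightarrow> 'a set \<Rightarrow> ('a \<Rightarrow> 'a \<Rightarrow> real) \<Rightarrow> ('g \<Rightarrow> 'a \<Rightarrow> 'a) \<Rightarrow> bool" where
  "isometric_action G S d act \<longleftrightarrow>
     (\<forall>g\<in>carrier G. \<forall>x\<in>S. act g x \<in> S) \<and>
     (\<forall>x\<in>S. act \<one>\<^bsub>G\<^esub> x = x) \<and>
     (\<forall>g\<in>carrier G. \<forall>h\<in>carrier G. \<forall>x\<in>S. act (g \<otimes>\<^bsub>G\<^esub> h) x = act g (act h x)) \<and>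
     (\<forall>g\<in>carrier G. \<forall>x\<in>S. \<forall>y\<in>S. d (act g x) (act g y) = d x y)"

definition Fix :: "'a set \<Rightarrow> ('g \<Rightarrow> 'a \<Rightarrow> 'a) \<Rightarrow> 'g \<Rightarrow> 'a set" where
  "Fix S act g = {x \<in> S. act g x = x}"

definition GF_tree :: "('g, 'z) monoid_scheme \<Rightarrow> (nat \<Rightarrow> 'g set) \<Rightarrow> nat \<Rightarrow> 'a set \<Rightarrow> ('a \<Rightarrow> 'a \<Rightarrow> real) \<Rightarrow> ('g \<Rightarrow> 'a \<Rightarrow> 'a) \<Rightarrow> bool" where
  "GF_tree G Gs m S d act \<longleftrightarrow> R_tree S d \<and> isometric_action G S d act \<and>
     (\<forall>P\<in>peripheral_subgroups G Gs m. \<exists>!x. x \<in> S \<and> (\<forall>g\<in>P. act g x = x))"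

definition arc_stab :: "('g, 'z) monoid_scheme \<Rightarrow> 'a set \<Rightarrow> ('a \<Rightarrow> 'a \<Rightarrow> real) \<Rightarrow> ('g \<Rightarrow> 'a \<Rightarrow> 'a) \<Rightarrow> 'a \<Rightarrow> 'a \<Rightarrow> 'g set" where
  "arc_stab G S d act x y = {g \<in> carrier G. \<forall>z\<in>segment S d x y. act g z = z}"

definition small_tree :: "('g, 'z) monoid_scheme \<Rightarrow> (nat \<Rightarrow> 'g set) \<Rightarrow> nat \<Rightarrow> 'a set \<Rightarrow> ('a \<Rightarrow> 'a \<Rightarrow> real) \<Rightarrow> ('g \<Rightarrow> 'a \<Rightarrow> 'a) \<Rightarrow> bool" where
  "small_tree G Gs m S d act \<longleftrightarrow>
     (\<forall>x\<in>S. \<forall>y\<in>S. x \<noteq> y \<longrightarrow>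
        (let A = arc_stab G S d act x y in
           A = {\<one>\<^bsub>G\<^esub>} \<or>
           ((\<exists>c\<in>carrier G. A = generate G {c}) \<and> \<not> peripheral_subgroup G Gs m A)))"

definition subtree :: "'a set \<Rightarrow> ('a \<Rightarrow> 'a \<Rightarrow> real) \<Rightarrow> 'a set \<Rightarrow> bool" where
  "subtree S d Y \<longleftrightarrow> Y \<noteq> {} \<and> Y \<subseteq> S \<and> (\<forall>x\<in>Y. \<forall>y\<in>Y. segment S d x y \<subseteq> Y)"

definition minimal_tree :: "('g, 'z) monoid_scheme \<Rightarrow> 'a set \<Rightarrow> ('a \<Rightarrow> 'a \<Rightarrow> real) \<Rightarrow> ('g \<Rightarrow> 'a \<Rightarrow> 'a) \<Rightarrow> bool" where
  "minimal_tree G S d act \<longleftrightarrow>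
     (\<forall>Y. subtree S d Y \<and> (\<forall>g\<in>carrier G. act g ` Y \<subseteq> Y) \<longrightarrow> Y = S)"

definition small_minimal_GF_tree :: "('g, 'z) monoid_scheme \<Rightarrow> (nat \<Rightarrow> 'g set) \<Rightarrow> nat \<Rightarrow> 'a set \<Rightarrow> ('a \<Rightarrow> 'a \<Rightarrow> real) \<Rightarrow> ('g \<Rightarrow> 'a \<Rightarrow> 'a) \<Rightarrow> bool" where
  "small_minimal_GF_tree G Gs m S d act \<longleftrightarrow>
     GF_tree G Gs m S d act \<and> small_tree G Gs m S d act \<and> minimal_tree G S d act"

definition k_tame :: "('g, 'z) monoid_scheme \<Rightarrow> (nat \<Rightarrow> 'g set) \<Rightarrow> nat \<Rightarrow> nat \<Rightarrow> 'a set \<Rightarrow> ('a \<Rightarrow> 'a \<Rightarrow> real) \<Rightarrow> ('g \<Rightarrow> 'a \<Rightarrow> 'a) \<Rightarrow> bool" where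
  "k_tame G Gs m k S d act \<longleftrightarrow> small_minimal_GF_tree G Gs m S d act \<and>
     (\<forall>g\<in>carrier G. \<not> peripheral_elem G Gs m g \<longrightarrow>
        (\<forall>l::nat. l \<ge> 1 \<longrightarrow> Fix S act (g [^]\<^bsub>G\<^esub> l) \<subseteq> Fix S act (g [^]\<^bsub>G\<^esub> k)))"

definition eGH_converges :: "('g, 'z) monoid_scheme \<Rightarrow> (nat \<Rightarrow> 'b set) \<Rightarrow> (nat \<Rightarrow> 'b \<Rightarrow> 'b \<Rightarrow> real) \<Rightarrow> (nat \<Rightarrow> 'g \<Rightarrow> 'b \<Rightarrow> 'b) \<Rightarrow> 'a set \<Rightarrow> ('a \<Rightarrow> 'a \<Rightarrow> real) \<Rightarrow> ('g \<Rightarrow> 'a \<Rightarrow> 'a) \<Rightarrow> bool" where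
  "eGH_converges G Sn dn actn S d act \<longleftrightarrow>
     (\<forall>K P \<epsilon>. finite K \<and> K \<subseteq> S \<and> finite P \<and> P \<subseteq> carrier G \<and> \<epsilon> > 0 \<longrightarrow>
        (\<exists>n0. \<forall>n\<ge>n0. \<exists>Kn R. finite Kn \<and> Kn \<subseteq> Sn n \<and> R \<subseteq> K \<times> Kn \<and> fst ` R = K \<and> snd ` R = Kn \<and>
           (\<forall>(x, x')\<in>R. \<forall>(y, y')\<in>R. \<forall>g\<in>P. \<forall>h\<in>P.
              \<bar>d (act g x) (act h y) - dn n (actn n g x') (actn n h y')\<bar> < \<epsilon>)))"

end

theory Submission
  imports Defs
begin


lemma lip_cont:
  assumes M: "Metric_space S d" and inS: "\<forall>t\<in>{0..1::real}. p t \<in> S"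
    and lip: "\<forall>s\<in>{0..1}. \<forall>t\<in>{0..1}. d (p s) (p t) \<le> C * \<bar>s - t\<bar>"
  shows "continuous_map (top_of_set {0..1}) (Metric_space.mtopology S d) p"
proof -
  interpret M: Metric_space S d by (rule M)
  show ?thesis unfolding M.continuous_map_to_metric
  proof (intro ballI allI impI)
    fix x e assume x: "x \<in> topspace (top_of_set {0..1::real})" and e: "(e::real) > 0"
    let ?U = "{0..1::real} \<inter> ball x (e/(\<bar>C\<bar>+1))"
    have op: "openin (top_of_set {0..1}) ?U" by (rule openin_open_Int) simp
    have xU: "x \<in> ?U" using x e by auto
    have "\<forall>y\<in>?U. p y \<in> M.mball (p x) e"
    proof
      fix y assume y: "y \<in> ?U"
      have x01: "x \<in> {0..1}" using x by simp
      have "\<bar>x - y\<bar> < e/(\<bar>C\<bar>+1)" using y by (auto simp: dist_real_def)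
      then have "(\<bar>C\<bar>+1) * \<bar>x - y\<bar> < e"
        by (simp add: pos_less_divide_eq mult.commute)
      moreover have "C * \<bar>x - y\<bar> \<le> (\<bar>C\<bar>+1) * \<bar>x - y\<bar>"
        by (intro mult_right_mono) auto
      moreover have "d (p x) (p y) \<le> C * \<bar>x - y\<bar>" using lip x01 y by auto
      ultimately show "p y \<in> M.mball (p x) e" using inS x01 y by auto
    qed
    then show "\<exists>U. openin (top_of_set {0..1}) U \<and> x \<in> U \<and> (\<forall>y\<in>U. p y \<in> M.mball (p x) e)"
      using op xU by blast
  qed
qed

lemma arc_rescale:
  assumes M: "Metric_space S d" and L: "L > 0" and inS: "\<forall>t\<in>{0..L}. q t \<in> S"
    and inj: "inj_on q {0..L}"
    and lip: "\<forall>s\<in>{0..L}. \<forall>t\<in>{0..L}. d (q s) (q t) \<le> C * \<bar>s - t\<bar>"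
    and q0: "q 0 = x" and qL: "q L = y"
    and U: "\<forall>p. continuous_map (top_of_set {0..1::real}) (Metric_space.mtopology S d) p \<and>
             inj_on p {0..1} \<and> p 0 = x \<and> p 1 = y \<longrightarrow> p ` {0..1} = \<Gamma>"
  shows "q ` {0..L} = \<Gamma>"
proof -
  define p where "p = (\<lambda>t. q (L * t))"
  have sc: "(\<lambda>t. L * t) ` {0..1} = {0..L}"
  proof
    show "(\<lambda>t. L * t) ` {0..1} \<subseteq> {0..L}"
    proof
      fix z assume "z \<in> (\<lambda>t. L * t) ` {0..1}"
      then obtain t where t: "t \<in> {0..1}" "z = L * t" by blast
      have "L * t \<le> L * 1" using t L by (intro mult_left_mono) auto
      moreover have "0 \<le> L * t" using t L by simp
      ultimately show "z \<in> {0..L}" using t by simp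
    qed
    show "{0..L} \<subseteq> (\<lambda>t. L * t) ` {0..1}"
    proof
      fix z assume z: "z \<in> {0..L}"
      have "z = L * (z / L)" using L by simp
      moreover have "z / L \<in> {0..1}" using z L by auto
      ultimately show "z \<in> (\<lambda>t. L * t) ` {0..1}" by blast
    qed
  qed
  have "p ` {0..1} = q ` ((\<lambda>t. L * t) ` {0..1})" by (simp add: p_def image_image)
  then have img: "p ` {0..1} = q ` {0..L}" using sc by simp
  have mem: "\<And>t. t \<in> {0..1} \<Longrightarrow> L * t \<in> {0..L}" using sc by blast
  have "continuous_map (top_of_set {0..1}) (Metric_space.mtopology S d) p"
  proof (rule lip_cont[OF M, where C="C * L"])
    show "\<forall>t\<in>{0..1}. p t \<in> S" using inS mem by (simp add: p_def)
    show "\<forall>s\<in>{0..1}. \<forall>t\<in>{0..1}. d (p s) (p t) \<le> C * L * \<bar>s - t\<bar>"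
    proof (intro ballI)
      fix s t :: real assume s: "s \<in> {0..1}" and t: "t \<in> {0..1}"
      have ab0: "L * s - L * t = L * (s - t)" by (simp add: algebra_simps)
      have ab: "\<bar>L * s - L * t\<bar> = L * \<bar>s - t\<bar>" unfolding ab0 using L by (simp add: abs_mult)
      have "d (q (L * s)) (q (L * t)) \<le> C * \<bar>L * s - L * t\<bar>" using lip mem[OF s] mem[OF t] by blast
      then have "d (p s) (p t) \<le> C * \<bar>L * s - L * t\<bar>" by (simp add: p_def)
      also have "\<dots> = C * (L * \<bar>s - t\<bar>)" by (simp only: ab)
      finally show "d (p s) (p t) \<le> C * L * \<bar>s - t\<bar>" by (simp add: mult.assoc)
    qed
  qed
  moreover have "inj_on p {0..1}"
  proof (rule inj_onI)
    fix s t assume s: "s \<in> {0..1}" and t: "t \<in> {0..1}" and e: "p s = p t"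
    have "q (L * s) = q (L * t)" using e by (simp add: p_def)
    then have "L * s = L * t" by (rule inj_onD[OF inj _ mem[OF s] mem[OF t]])
    then show "s = t" using L by simp
  qed
  moreover have "p 0 = x" "p 1 = y" using q0 qL by (simp_all add: p_def)
  ultimately have "p ` {0..1} = \<Gamma>" using U[rule_format, of p] by blast
  then show ?thesis using img by simp
qed

lemma geo_facts:
  assumes M: "Metric_space S d" and g: "geodesic_seg S d x y \<gamma>" and t: "t \<in> {0..d x y}"
  shows "d x (\<gamma> t) = t" "d (\<gamma> t) y = d x y - t" "\<gamma> t \<in> S"
proof -
  have D: "0 \<le> d x y" using Metric_space.nonneg[OF M] by blast
  have g0: "\<gamma> 0 = x" and gD: "\<gamma> (d x y) = y" and iso: "\<forall>s\<in>{0..d x y}. \<forall>t\<in>{0..d x y}. d (\<gamma> s) (\<gamma> t) = \<bar>s - t\<bar>"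
    and sub: "\<gamma> ` {0..d x y} \<subseteq> S"
    using g by (auto simp: geodesic_seg_def)
  have z: "0 \<in> {0..d x y}" and e: "d x y \<in> {0..d x y}" using D by auto
  have "d (\<gamma> 0) (\<gamma> t) = \<bar>0 - t\<bar>" using iso z t by blast
  then show "d x (\<gamma> t) = t" using g0 t by simp
  have "d (\<gamma> t) (\<gamma> (d x y)) = \<bar>t - d x y\<bar>" using iso e t by blast
  then show "d (\<gamma> t) y = d x y - t" using gD t by simp
  show "\<gamma> t \<in> S" using sub t by blast
qed

lemma geo_sub_seg:
  assumes M: "Metric_space S d" and g: "geodesic_seg S d x y \<gamma>"
  shows "\<gamma> ` {0..d x y} \<subseteq> segment S d x y"
  using geo_facts[OF M g] by (auto simp: segment_def)



lemma R_tree_geo: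
  assumes R: "R_tree S d" and x: "x \<in> S" and y: "y \<in> S"
  obtains \<gamma> where "geodesic_seg S d x y \<gamma>"
    "\<forall>p. continuous_map (top_of_set {0..1::real}) (Metric_space.mtopology S d) p \<and>
             inj_on p {0..1} \<and> p 0 = x \<and> p 1 = y \<longrightarrow> p ` {0..1} = \<gamma> ` {0..d x y}"
proof -
  have h: "\<forall>x\<in>S. \<forall>y\<in>S. \<exists>\<gamma>. geodesic_seg S d x y \<gamma> \<and>
        (\<forall>p. continuous_map (top_of_set {0..1::real}) (Metric_space.mtopology S d) p \<and>
             inj_on p {0..1} \<and> p 0 = x \<and> p 1 = y \<longrightarrow> p ` {0..1} = \<gamma> ` {0..d x y})"
    by (rule R[unfolded R_tree_def, THEN conjunct2, THEN conjunct2])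
  have "\<exists>\<gamma>. geodesic_seg S d x y \<gamma> \<and>
        (\<forall>p. continuous_map (top_of_set {0..1::real}) (Metric_space.mtopology S d) p \<and>
             inj_on p {0..1} \<and> p 0 = x \<and> p 1 = y \<longrightarrow> p ` {0..1} = \<gamma> ` {0..d x y})"
    by (rule bspec[OF bspec[OF h x] y])
  then obtain \<gamma> where P: "geodesic_seg S d x y \<gamma> \<and>
        (\<forall>p. continuous_map (top_of_set {0..1::real}) (Metric_space.mtopology S d) p \<and>
             inj_on p {0..1} \<and> p 0 = x \<and> p 1 = y \<longrightarrow> p ` {0..1} = \<gamma> ` {0..d x y})"
    by (rule exE)
  show thesis by (rule that[OF conjunct1[OF P] conjunct2[OF P]])
qed

lemma R_tree_geo1:
  assumes R: "R_tree S d" and x: "x \<in> S" and y: "y \<in> S"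
  obtains \<gamma> where "geodesic_seg S d x y \<gamma>"
proof -
  obtain \<gamma> where g: "geodesic_seg S d x y \<gamma>" and "\<forall>p. continuous_map (top_of_set {0..1::real}) (Metric_space.mtopology S d) p \<and>
             inj_on p {0..1} \<and> p 0 = x \<and> p 1 = y \<longrightarrow> p ` {0..1} = \<gamma> ` {0..d x y}"
    by (rule R_tree_geo[OF R x y])
  show thesis by (rule that[OF g])
qed

lemma R1:
  assumes R: "R_tree S d" and x: "x \<in> S" and y: "y \<in> S"
  shows "\<exists>\<gamma>. geodesic_seg S d x y \<gamma> \<and> \<gamma> ` {0..d x y} = segment S d x y \<and>
     (\<forall>p. continuous_map (top_of_set {0..1::real}) (Metric_space.mtopology S d) p \<and>
             inj_on p {0..1} \<and> p 0 = x \<and> p 1 = y \<longrightarrow> p ` {0..1} = segment S d x y)"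
proof -
  have M: "Metric_space S d" using R by (simp add: R_tree_def)
  interpret M: Metric_space S d by (rule M)
  obtain \<gamma> where g: "geodesic_seg S d x y \<gamma>" and U: "\<forall>p. continuous_map (top_of_set {0..1::real}) (Metric_space.mtopology S d) p \<and>
             inj_on p {0..1} \<and> p 0 = x \<and> p 1 = y \<longrightarrow> p ` {0..1} = \<gamma> ` {0..d x y}"
    by (rule R_tree_geo[OF R x y])
  have "segment S d x y \<subseteq> \<gamma> ` {0..d x y}"
  proof
    fix z assume z: "z \<in> segment S d x y"
    then have zS: "z \<in> S" and zd: "d x z + d z y = d x y" by (auto simp: segment_def)
    show "z \<in> \<gamma> ` {0..d x y}"
    proof (cases "x = y")
      case True
      have "d x x = 0" using x by simp
      then have "d x z = 0" using True zd M.nonneg[of x z] M.nonneg[of z y] M.commute[of z x] by simp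
      then have "z = x" using x zS by simp
      moreover have "\<gamma> 0 = x" using g by (simp add: geodesic_seg_def)
      ultimately show ?thesis by force
    next
      case False
      define D where "D = d x y"
      have "d x y \<noteq> 0" using False M.zero[OF x y] by simp
      then have Dpos: "D > 0" using M.nonneg[of x y] unfolding D_def by (simp add: less_le)
      obtain \<gamma>1 where g1: "geodesic_seg S d x z \<gamma>1" by (rule R_tree_geo1[OF R x zS])
      obtain \<gamma>2 where g2: "geodesic_seg S d z y \<gamma>2" by (rule R_tree_geo1[OF R zS y])
      define a where "a = d x z"
      have a0: "0 \<le> a" unfolding a_def by simp
      have aD: "a \<le> D" using zd M.nonneg[of z y] unfolding a_def D_def by linarith
      define q where "q = (\<lambda>t. if t \<le> a then \<gamma>1 t else \<gamma>2 (t - a))"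
      have g1z: "\<gamma>1 a = z" "\<gamma>1 0 = x" using g1 by (auto simp: geodesic_seg_def a_def)
      have g2z: "\<gamma>2 0 = z" "\<gamma>2 (d z y) = y" using g2 by (auto simp: geodesic_seg_def)
      have i1: "\<And>s. s \<in> {0..a} \<Longrightarrow> d x (\<gamma>1 s) = s \<and> d (\<gamma>1 s) z = a - s \<and> \<gamma>1 s \<in> S"
        using geo_facts[OF M g1] unfolding a_def by blast
      have i2: "\<And>s. s \<in> {0..d z y} \<Longrightarrow> d z (\<gamma>2 s) = s \<and> d (\<gamma>2 s) y = d z y - s \<and> \<gamma>2 s \<in> S"
        using geo_facts[OF M g2] by blast
      have iso1: "\<And>s t. s \<in> {0..a} \<Longrightarrow> t \<in> {0..a} \<Longrightarrow> d (\<gamma>1 s) (\<gamma>1 t) = \<bar>s - t\<bar>"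
        using g1 unfolding geodesic_seg_def a_def by blast
      have iso2: "\<And>s t. s \<in> {0..d z y} \<Longrightarrow> t \<in> {0..d z y} \<Longrightarrow> d (\<gamma>2 s) (\<gamma>2 t) = \<bar>s - t\<bar>"
        using g2 unfolding geodesic_seg_def by blast
      have dzy: "d z y = D - a" using zd unfolding a_def D_def by linarith
      have qS: "\<forall>t\<in>{0..D}. q t \<in> S"
      proof
        fix t assume t: "t \<in> {0..D}"
        show "q t \<in> S"
        proof (cases "t \<le> a")
          case True then show ?thesis using i1[of t] t by (simp add: q_def)
        next
          case False then show ?thesis using i2[of "t - a"] t dzy by (simp add: q_def)
        qed
      qed
      have qd: "\<And>t. t \<in> {0..D} \<Longrightarrow> d x (q t) = t"
      proof -
        fix t assume t: "t \<in> {0..D}"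
        show "d x (q t) = t"
        proof (cases "t \<le> a")
          case True then show ?thesis using i1[of t] t by (simp add: q_def)
        next
          case False
          have r: "t - a \<in> {0..d z y}" using t False dzy by simp
          have h: "d z (\<gamma>2 (t-a)) = t - a" "d (\<gamma>2 (t-a)) y = d z y - (t - a)" "\<gamma>2 (t-a) \<in> S"
            using i2[OF r] by auto
          have "d x (\<gamma>2 (t-a)) \<le> d x z + d z (\<gamma>2 (t-a))" by (rule M.triangle[OF x zS h(3)])
          moreover have "d x y \<le> d x (\<gamma>2 (t-a)) + d (\<gamma>2 (t-a)) y" by (rule M.triangle[OF x h(3) y])
          ultimately show ?thesis using False h dzy unfolding q_def a_def D_def by simp
        qed
      qed
      have lip: "\<forall>s\<in>{0..D}. \<forall>t\<in>{0..D}. d (q s) (q t) \<le> 1 * \<bar>s - t\<bar>"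
      proof (intro ballI)
        fix s t assume s: "s \<in> {0..D}" and t: "t \<in> {0..D}"
        have mixed: "d (q u) (q v) \<le> \<bar>u - v\<bar>" if u: "u \<in> {0..D}" "u \<le> a" and v: "v \<in> {0..D}" "\<not> v \<le> a" for u v
        proof -
          have r: "v - a \<in> {0..d z y}" using v dzy by simp
          have u1: "u \<in> {0..a}" using u by simp
          have "d (\<gamma>1 u) (\<gamma>2 (v - a)) \<le> d (\<gamma>1 u) z + d z (\<gamma>2 (v - a))"
            by (rule M.triangle[OF conjunct2[OF conjunct2[OF i1[OF u1]]] zS conjunct2[OF conjunct2[OF i2[OF r]]]])
          also have "\<dots> = (a - u) + (v - a)" using i1[of u] i2[OF r] u by simp
          finally show ?thesis using u v by (simp add: q_def)
        qed
        show "d (q s) (q t) \<le> 1 * \<bar>s - t\<bar>"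
        proof (cases "s \<le> a")
          case True
          show ?thesis
          proof (cases "t \<le> a")
            case True
            then show ?thesis using \<open>s \<le> a\<close> s t iso1[of s t] by (simp add: q_def)
          next
            case False then show ?thesis using mixed[of s t] s t True by simp
          qed
        next
          case False
          show ?thesis
          proof (cases "t \<le> a")
            case True then show ?thesis using mixed[of t s] s t False
              by (simp add: M.commute[of "q s"] abs_minus_commute)
          next
            case False2: False
            have r1: "s - a \<in> {0..d z y}" "t - a \<in> {0..d z y}" using s t False False2 dzy by auto
            then show ?thesis using False False2 iso2[OF r1] by (simp add: q_def)
          qed
        qed
      qed
      have inj: "inj_on q {0..D}"
      proof (rule inj_onI)
        fix s t assume s: "s \<in> {0..D}" and t: "t \<in> {0..D}" and e: "q s = q t"
        have "s = d x (q s)" using qd[OF s] by simp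
        also have "\<dots> = d x (q t)" using e by simp
        also have "\<dots> = t" using qd[OF t] by simp
        finally show "s = t" .
      qed
      have q0: "q 0 = x" using g1z a0 by (simp add: q_def)
      have qD: "q D = y"
      proof (cases "D \<le> a")
        case True
        then have "d z y = 0" using dzy aD by simp
        then have "z = y" using zS y by simp
        then show ?thesis using True aD g1z by (simp add: q_def)
      next
        case False then show ?thesis using g2z dzy by (simp add: q_def)
      qed
      have "q ` {0..D} = \<gamma> ` {0..d x y}"
        by (rule arc_rescale[OF M Dpos qS inj lip q0 qD U])
      moreover have "q a = z" using g1z by (simp add: q_def)
      moreover have "a \<in> {0..D}" using a0 aD by simp
      ultimately show ?thesis unfolding D_def by blast
    qed
  qed
  then have eq: "\<gamma> ` {0..d x y} = segment S d x y" by (rule equalityI[OF geo_sub_seg[OF M g]])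
  have U': "\<forall>p. continuous_map (top_of_set {0..1::real}) (Metric_space.mtopology S d) p \<and>
             inj_on p {0..1} \<and> p 0 = x \<and> p 1 = y \<longrightarrow> p ` {0..1} = segment S d x y"
    using U unfolding eq .
  show ?thesis using g eq U' by (intro exI[of _ \<gamma>] conjI)
qed

lemma R1_seg:
  assumes R: "R_tree S d" and x: "x \<in> S" and y: "y \<in> S"
  obtains \<gamma> where "geodesic_seg S d x y \<gamma>" "\<gamma> ` {0..d x y} = segment S d x y"
proof -
  obtain \<gamma> where P: "geodesic_seg S d x y \<gamma> \<and> \<gamma> ` {0..d x y} = segment S d x y \<and>
     (\<forall>p. continuous_map (top_of_set {0..1::real}) (Metric_space.mtopology S d) p \<and>
             inj_on p {0..1} \<and> p 0 = x \<and> p 1 = y \<longrightarrow> p ` {0..1} = segment S d x y)"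
    using R1[OF R x y] by (rule exE)
  show thesis by (rule that[OF conjunct1[OF P] conjunct1[OF conjunct2[OF P]]])
qed

lemma R1_unique:
  assumes R: "R_tree S d" and x: "x \<in> S" and y: "y \<in> S"
  shows "\<forall>p. continuous_map (top_of_set {0..1::real}) (Metric_space.mtopology S d) p \<and>
             inj_on p {0..1} \<and> p 0 = x \<and> p 1 = y \<longrightarrow> p ` {0..1} = segment S d x y"
proof -
  obtain \<gamma> where P: "geodesic_seg S d x y \<gamma> \<and> \<gamma> ` {0..d x y} = segment S d x y \<and>
     (\<forall>p. continuous_map (top_of_set {0..1::real}) (Metric_space.mtopology S d) p \<and>
             inj_on p {0..1} \<and> p 0 = x \<and> p 1 = y \<longrightarrow> p ` {0..1} = segment S d x y)"
    using R1[OF R x y] by (rule exE)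
  show ?thesis by (rule conjunct2[OF conjunct2[OF P]])
qed

lemma R1arc:
  assumes R: "R_tree S d" and x: "x \<in> S" and y: "y \<in> S" and L: "L > 0"
    and inS: "\<forall>t\<in>{0..L}. q t \<in> S" and inj: "inj_on q {0..L}"
    and lip: "\<forall>s\<in>{0..L}. \<forall>t\<in>{0..L}. d (q s) (q t) \<le> C * \<bar>s - t\<bar>"
    and q0: "q 0 = x" and qL: "q L = y"
  shows "q ` {0..L} = segment S d x y"
proof -
  have M: "Metric_space S d" using R by (simp add: R_tree_def)
  show ?thesis by (rule arc_rescale[OF M L inS inj lip q0 qL R1_unique[OF R x y]])
qed

lemma seg_unique:
  assumes R: "R_tree S d" and x: "x \<in> S" and y: "y \<in> S"
    and p: "p \<in> segment S d x y" and q: "q \<in> segment S d x y" and e: "d x p = d x q"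
  shows "p = q"
proof -
  have M: "Metric_space S d" using R by (simp add: R_tree_def)
  obtain \<gamma> where g: "geodesic_seg S d x y \<gamma>" and im: "\<gamma> ` {0..d x y} = segment S d x y"
    by (rule R1_seg[OF R x y])
  have "p \<in> \<gamma> ` {0..d x y}" using p im by simp
  then obtain s where s: "s \<in> {0..d x y}" "p = \<gamma> s" by blast
  have "q \<in> \<gamma> ` {0..d x y}" using q im by simp
  then obtain t where t: "t \<in> {0..d x y}" "q = \<gamma> t" by blast
  have "s = t" using geo_facts(1)[OF M g s(1)] geo_facts(1)[OF M g t(1)] s t e by simp
  then show ?thesis using s t by simp
qed

lemma pt_exists:
  assumes R: "R_tree S d" and x: "x \<in> S" and y: "y \<in> S" and t: "0 \<le> t" "t \<le> d x y"
  shows "\<exists>p\<in>segment S d x y. d x p = t"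
proof -
  have M: "Metric_space S d" using R by (simp add: R_tree_def)
  obtain \<gamma> where g: "geodesic_seg S d x y \<gamma>" and im: "\<gamma> ` {0..d x y} = segment S d x y"
    by (rule R1_seg[OF R x y])
  have tt: "t \<in> {0..d x y}" using t by simp
  show ?thesis using geo_facts(1)[OF M g tt] im tt by blast
qed

lemma seg_trans:
  assumes M: "Metric_space S d" and w: "w \<in> S" and y: "y \<in> S"
    and c: "c \<in> segment S d w y" and p: "p \<in> segment S d w c"
  shows "p \<in> segment S d w y"
proof -
  interpret M: Metric_space S d by (rule M)
  have cS: "c \<in> S" "d w c + d c y = d w y" using c by (auto simp: segment_def)
  have pS: "p \<in> S" "d w p + d p c = d w c" using p by (auto simp: segment_def)
  have "d p y \<le> d p c + d c y" using M.triangle pS cS y by blast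
  moreover have "d w y \<le> d w p + d p y" using M.triangle pS w y by blast
  ultimately show ?thesis using cS pS by (auto simp: segment_def)
qed



lemma tripod:
  assumes R: "R_tree S d" and x: "x \<in> S" and y: "y \<in> S" and z: "z \<in> S"
  shows "\<exists>c. c \<in> segment S d x y \<and> c \<in> segment S d x z \<and> c \<in> segment S d y z"
proof (cases "y = z")
  case True
  have M: "Metric_space S d" using R by (simp add: R_tree_def)
  have "d y y = 0" using Metric_space.zero[OF M y y] by simp
  then show ?thesis using True y by (intro exI[of _ y]) (simp add: segment_def)
next
  case False
  have M: "Metric_space S d" using R by (simp add: R_tree_def)
  interpret M: Metric_space S d by (rule M)
  obtain \<gamma> where g: "geodesic_seg S d x y \<gamma>" and gi: "\<gamma> ` {0..d x y} = segment S d x y"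
    by (rule R1_seg[OF R x y])
  obtain \<eta> where h: "geodesic_seg S d x z \<eta>" and hi: "\<eta> ` {0..d x z} = segment S d x z"
    by (rule R1_seg[OF R x z])
  define D1 where "D1 = d x y"
  define D2 where "D2 = d x z"
  have D0: "0 \<le> D1" "0 \<le> D2" by (simp_all add: D1_def D2_def)
  note gf = geo_facts[OF M g, folded D1_def]
  note hf = geo_facts[OF M h, folded D2_def]
  have giso: "\<And>s t. s \<in> {0..D1} \<Longrightarrow> t \<in> {0..D1} \<Longrightarrow> d (\<gamma> s) (\<gamma> t) = \<bar>s - t\<bar>"
    using g unfolding geodesic_seg_def D1_def by blast
  have hiso: "\<And>s t. s \<in> {0..D2} \<Longrightarrow> t \<in> {0..D2} \<Longrightarrow> d (\<eta> s) (\<eta> t) = \<bar>s - t\<bar>"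
    using h unfolding geodesic_seg_def D2_def by blast
  have g0: "\<gamma> 0 = x" "\<gamma> D1 = y" using g by (auto simp: geodesic_seg_def D1_def)
  have h0: "\<eta> 0 = x" "\<eta> D2 = z" using h by (auto simp: geodesic_seg_def D2_def)
  define A where "A = {t. 0 \<le> t \<and> t \<le> D1 \<and> t \<le> D2 \<and> \<gamma> t = \<eta> t}"
  have A0: "0 \<in> A" using D0 g0 h0 by (simp add: A_def)
  have Ane: "A \<noteq> {}" using A0 by blast
  have Abdd: "bdd_above A" by (rule bdd_aboveI[where M=D1]) (simp add: A_def)
  define t0 where "t0 = Sup A"
  have t0ge: "0 \<le> t0" unfolding t0_def using cSup_upper[OF A0 Abdd] .
  have t0le1: "t0 \<le> D1" unfolding t0_def by (rule cSup_least[OF Ane]) (simp add: A_def)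
  have t0le2: "t0 \<le> D2" unfolding t0_def by (rule cSup_least[OF Ane]) (simp add: A_def)
  note t0le = t0le1 t0le2
  have upper: "\<And>t. t \<in> A \<Longrightarrow> t \<le> t0" unfolding t0_def by (rule cSup_upper[OF _ Abdd])
  have t0r: "t0 \<in> {0..D1}" "t0 \<in> {0..D2}" using t0ge t0le by auto
  have eq0: "\<gamma> t0 = \<eta> t0"
  proof (rule ccontr)
    assume ne: "\<gamma> t0 \<noteq> \<eta> t0"
    define e where "e = d (\<gamma> t0) (\<eta> t0)"
    have nz: "e \<noteq> 0" using ne M.zero[OF gf(3)[OF t0r(1)] hf(3)[OF t0r(2)]] unfolding e_def by simp
    have ep: "e > 0" using nz M.nonneg[of "\<gamma> t0" "\<eta> t0"] unfolding e_def by (simp add: less_le)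
    have "t0 - e/3 < t0" using ep by simp
    then have "\<exists>t\<in>A. t0 - e/3 < t" unfolding t0_def by (rule iffD1[OF less_cSup_iff[OF Ane Abdd]])
    then obtain t where tA: "t \<in> A" and tl: "t0 - e/3 < t" by (rule bexE)
    have tt: "t \<le> t0" using upper tA .
    have tr: "t \<in> {0..D1}" "t \<in> {0..D2}" and et: "\<gamma> t = \<eta> t" using tA by (auto simp: A_def)
    have "e \<le> d (\<gamma> t0) (\<gamma> t) + d (\<gamma> t) (\<eta> t0)"
      unfolding e_def by (rule M.triangle[OF gf(3)[OF t0r(1)] gf(3)[OF tr(1)] hf(3)[OF t0r(2)]])
    also have "\<dots> = \<bar>t0 - t\<bar> + \<bar>t - t0\<bar>" using giso[OF t0r(1) tr(1)] hiso[OF tr(2) t0r(2)] et by simp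
    finally show False using tt tl by simp
  qed
  define c where "c = \<gamma> t0"
  have key: "\<And>s r. s \<in> {t0..D1} \<Longrightarrow> r \<in> {t0..D2} \<Longrightarrow> \<gamma> s = \<eta> r \<Longrightarrow> s = t0 \<and> r = t0"
  proof -
    fix s r assume s: "s \<in> {t0..D1}" and r: "r \<in> {t0..D2}" and e: "\<gamma> s = \<eta> r"
    have sr: "s \<in> {0..D1}" "r \<in> {0..D2}" using s r t0ge by auto
    have "s = r" using gf(1)[OF sr(1)] hf(1)[OF sr(2)] e by simp
    then have "s \<in> A" using sr s r e by (simp add: A_def)
    then have "s \<le> t0" by (rule upper)
    then show "s = t0 \<and> r = t0" using s \<open>s = r\<close> by simp
  qed
  define L where "L = D1 + D2 - 2 * t0"
  have Lpos: "L > 0"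
  proof (rule ccontr)
    assume "\<not> L > 0"
    then have "t0 = D1" "t0 = D2" using t0le unfolding L_def by linarith+
    then show False using False g0 h0 eq0 by simp
  qed
  define q where "q = (\<lambda>t. if t \<le> D1 - t0 then \<gamma> (D1 - t) else \<eta> (t + 2 * t0 - D1))"
  have qS: "\<forall>t\<in>{0..L}. q t \<in> S"
  proof
    fix t assume t: "t \<in> {0..L}"
    show "q t \<in> S"
    proof (cases "t \<le> D1 - t0")
      case True then show ?thesis using gf(3)[of "D1 - t"] t t0ge by (simp add: q_def)
    next
      case False then show ?thesis using hf(3)[of "t + 2*t0 - D1"] t t0ge unfolding L_def by (simp add: q_def)
    qed
  qed
  have lip: "\<forall>s\<in>{0..L}. \<forall>t\<in>{0..L}. d (q s) (q t) \<le> 1 * \<bar>s - t\<bar>"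
  proof (intro ballI)
    fix s t assume s: "s \<in> {0..L}" and t: "t \<in> {0..L}"
    have mixed: "d (q u) (q v) \<le> \<bar>u - v\<bar>" if u: "u \<in> {0..L}" "u \<le> D1 - t0" and v: "v \<in> {0..L}" "\<not> v \<le> D1 - t0" for u v
    proof -
      have a1: "D1 - u \<in> {0..D1}" using u t0ge by auto
      have a2: "v + 2*t0 - D1 \<in> {0..D2}" using v t0ge unfolding L_def by auto
      have "d (\<gamma> (D1 - u)) (\<eta> (v + 2*t0 - D1)) \<le> d (\<gamma> (D1 - u)) (\<gamma> t0) + d (\<gamma> t0) (\<eta> (v + 2*t0 - D1))"
        by (rule M.triangle[OF gf(3)[OF a1] gf(3)[OF t0r(1)] hf(3)[OF a2]])
      also have "\<dots> = (D1 - u - t0) + (v + 2*t0 - D1 - t0)"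
        using giso[OF a1 t0r(1)] hiso[OF t0r(2) a2] eq0 u v by simp
      finally show ?thesis using u v by (simp add: q_def)
    qed
    show "d (q s) (q t) \<le> 1 * \<bar>s - t\<bar>"
    proof (cases "s \<le> D1 - t0")
      case True
      show ?thesis
      proof (cases "t \<le> D1 - t0")
        case True
        have a: "D1 - s \<in> {0..D1}" "D1 - t \<in> {0..D1}" using s t True \<open>s \<le> D1 - t0\<close> t0ge by auto
        have "\<bar>(D1 - s) - (D1 - t)\<bar> = \<bar>s - t\<bar>" by (simp add: abs_if)
        then show ?thesis using giso[OF a] True \<open>s \<le> D1 - t0\<close> by (simp add: q_def)
      next
        case False then show ?thesis using mixed[of s t] s t True by simp
      qed
    next
      case False
      show ?thesis
      proof (cases "t \<le> D1 - t0")
        case True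
        have "d (q t) (q s) \<le> \<bar>t - s\<bar>" using mixed[of t s] s t False True by simp
        moreover have "d (q s) (q t) = d (q t) (q s)" by (rule M.commute)
        moreover have "\<bar>t - s\<bar> = \<bar>s - t\<bar>" by (rule abs_minus_commute)
        ultimately show ?thesis by simp
      next
        case False2: False
        have a: "s + 2*t0 - D1 \<in> {0..D2}" "t + 2*t0 - D1 \<in> {0..D2}" using s t False False2 t0ge unfolding L_def by auto
        show ?thesis using hiso[OF a] False False2 by (simp add: q_def)
      qed
    qed
  qed
  have inj: "inj_on q {0..L}"
  proof (rule inj_onI)
    fix s t assume s: "s \<in> {0..L}" and t: "t \<in> {0..L}" and e: "q s = q t"
    have dd: "d x (q s) = d x (q t)" using e by simp
    have mixed: "False" if u: "u \<in> {0..L}" "u \<le> D1 - t0" and v: "v \<in> {0..L}" "\<not> v \<le> D1 - t0" and e: "q u = q v" for u v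
    proof -
      have r: "D1 - u \<in> {t0..D1}" "v + 2*t0 - D1 \<in> {t0..D2}" using u v t0ge unfolding L_def by auto
      have qu: "q u = \<gamma> (D1 - u)" using u by (simp add: q_def)
      have qv: "q v = \<eta> (v + 2*t0 - D1)" using v by (simp add: q_def)
      have "\<gamma> (D1 - u) = \<eta> (v + 2*t0 - D1)" using e unfolding qu qv .
      then have "v + 2*t0 - D1 = t0" using key[OF r] by blast
      then show False using v by linarith
    qed
    show "s = t"
    proof (cases "s \<le> D1 - t0")
      case True
      show ?thesis
      proof (cases "t \<le> D1 - t0")
        case True2: True
        have a: "D1 - s \<in> {0..D1}" "D1 - t \<in> {0..D1}" using s t True True2 t0ge by auto
        have qs: "q s = \<gamma> (D1 - s)" using True by (simp add: q_def)
        have qt: "q t = \<gamma> (D1 - t)" using True2 by (simp add: q_def)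
        have "D1 - s = D1 - t" using dd unfolding qs qt gf(1)[OF a(1)] gf(1)[OF a(2)] .
        then show ?thesis by simp
      next
        case False then show ?thesis using mixed[OF s True t False e] by simp
      qed
    next
      case False
      show ?thesis
      proof (cases "t \<le> D1 - t0")
        case True then show ?thesis using mixed[OF t True s False e[symmetric]] by simp
      next
        case False2: False
        have a: "s + 2*t0 - D1 \<in> {0..D2}" "t + 2*t0 - D1 \<in> {0..D2}" using s t False False2 t0ge unfolding L_def by auto
        have qs: "q s = \<eta> (s + 2*t0 - D1)" using False by (simp add: q_def)
        have qt: "q t = \<eta> (t + 2*t0 - D1)" using False2 by (simp add: q_def)
        have "s + 2*t0 - D1 = t + 2*t0 - D1" using dd unfolding qs qt hf(1)[OF a(1)] hf(1)[OF a(2)] .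
        then show ?thesis by simp
      qed
    qed
  qed
  have q0: "q 0 = y" using g0 t0le by (simp add: q_def)
  have qL: "q L = z"
  proof (cases "L \<le> D1 - t0")
    case True
    then have "D2 = t0" using t0le unfolding L_def by linarith
    then show ?thesis using True h0 eq0 unfolding q_def L_def by simp
  next
    case False then show ?thesis using h0 unfolding q_def L_def by simp
  qed
  have img: "q ` {0..L} = segment S d y z" by (rule R1arc[OF R y z Lpos qS inj lip q0 qL])
  have "D1 - t0 \<in> {0..L}" using t0le unfolding L_def by auto
  moreover have "q (D1 - t0) = c" by (simp add: q_def c_def)
  ultimately have c1: "c \<in> segment S d y z" using img by blast
  have c2: "c \<in> segment S d x y" using gi t0r unfolding c_def D1_def by blast
  have "\<eta> t0 \<in> \<eta> ` {0..D2}" using t0r(2) by (rule imageI)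
  then have c3: "c \<in> segment S d x z" using hi eq0 unfolding c_def D2_def by simp
  show ?thesis using c1 c2 c3 by blast
qed

lemma seg_move:
  assumes R: "R_tree S d" and w: "w \<in> S" and y: "y \<in> S" and z: "z \<in> S"
    and c1: "c1 \<in> segment S d w y" and c2y: "c2 \<in> segment S d w y" and c2z: "c2 \<in> segment S d w z"
    and le: "d w c1 \<le> d w c2"
  shows "c1 \<in> segment S d w z"
proof -
  have M: "Metric_space S d" using R by (simp add: R_tree_def)
  have c2S: "c2 \<in> S" using c2y by (simp add: segment_def)
  obtain p where p: "p \<in> segment S d w c2" "d w p = d w c1"
    using pt_exists[OF R w c2S Metric_space.nonneg[OF M, of w c1] le] by blast
  have py: "p \<in> segment S d w y" by (rule seg_trans[OF M w y c2y p(1)])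
  have pz: "p \<in> segment S d w z" by (rule seg_trans[OF M w z c2z p(1)])
  have "c1 = p" using seg_unique[OF R w y c1 py] p(2) by simp
  then show ?thesis using pz by simp
qed

lemma four_point:
  assumes R: "R_tree S d" and w: "w \<in> S" and x: "x \<in> S" and y: "y \<in> S" and z: "z \<in> S"
  shows "d x z + d w y \<le> max (d x y + d w z) (d y z + d w x)"
proof -
  have M: "Metric_space S d" using R by (simp add: R_tree_def)
  interpret M: Metric_space S d by (rule M)
  obtain c1 where c1: "c1 \<in> segment S d w x" "c1 \<in> segment S d w y" "c1 \<in> segment S d x y"
    using tripod[OF R w x y] by blast
  obtain c2 where c2: "c2 \<in> segment S d w y" "c2 \<in> segment S d w z" "c2 \<in> segment S d y z"
    using tripod[OF R w y z] by blast
  have c1e: "c1 \<in> S" "d w c1 + d c1 x = d w x" "d w c1 + d c1 y = d w y" "d x c1 + d c1 y = d x y"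
    using c1 by (auto simp: segment_def)
  have c2e: "c2 \<in> S" "d w c2 + d c2 y = d w y" "d w c2 + d c2 z = d w z" "d y c2 + d c2 z = d y z"
    using c2 by (auto simp: segment_def)
  show ?thesis
  proof (cases "d w c1 \<le> d w c2")
    case True
    have "c1 \<in> segment S d w z" by (rule seg_move[OF R w y z c1(2) c2(1) c2(2) True])
    then have e: "d w c1 + d c1 z = d w z" by (simp add: segment_def)
    have "d x z \<le> d x c1 + d c1 z" by (rule M.triangle[OF x c1e(1) z])
    then have "d x z + d w y \<le> d x y + d w z" using c1e e M.commute[of c1 x] by linarith
    then show ?thesis by simp
  next
    case False
    have "c2 \<in> segment S d w x" by (rule seg_move[OF R w y x c2(1) c1(2) c1(1)]) (use False in simp)
    then have e: "d w c2 + d c2 x = d w x" by (simp add: segment_def)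
    have "d x z \<le> d x c2 + d c2 z" by (rule M.triangle[OF x c2e(1) z])
    then have "d x z + d w y \<le> d y z + d w x" using c2e e M.commute[of c2 x] M.commute[of c2 y] by linarith
    then show ?thesis by simp
  qed
qed



lemma lin_rec:
  fixes f :: "nat \<Rightarrow> real"
  assumes gt: "f 2 > f 1"
    and rec: "\<And>j. j \<ge> 1 \<Longrightarrow> f j > f 1 \<Longrightarrow> f (j+1) + f (j-1) = 2 * f j"
  shows "\<And>j. j \<ge> 1 \<Longrightarrow> f j = real j * (f 2 - f 1) + (2 * f 1 - f 2)"
proof -
  define ell where "ell = f 2 - f 1"
  define c where "c = 2 * f 1 - f 2"
  have lp: "ell > 0" using gt by (simp add: ell_def)
  have claim: "f (i+1) = real (i+1) * ell + c \<and> f (i+2) = real (i+2) * ell + c" for i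
  proof (induction i)
    case 0
    show ?case by (simp add: ell_def c_def numeral_2_eq_2)
  next
    case (Suc i)
    have a: "f (i+1) = real (i+1) * ell + c" and b: "f (i+2) = real (i+2) * ell + c" using Suc.IH by auto
    have f1: "f 1 = ell + c" by (simp add: ell_def c_def)
    have "real (i+2) * ell > 1 * ell" using lp by (intro mult_strict_right_mono) auto
    then have "f (i+2) > f 1" using b f1 by simp
    then have r: "f ((i+2)+1) + f ((i+2)-1) = 2 * f (i+2)" using rec[of "i+2"] by simp
    have e1: "(i+2)+1 = Suc i + 2" and e2: "(i+2) - 1 = i + 1" by simp_all
    have "f (Suc i + 2) = 2 * f (i+2) - f (i+1)" using r unfolding e1 e2 by simp
    also have "\<dots> = real (Suc i + 2) * ell + c" unfolding a b by (simp add: algebra_simps)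
    finally show ?case using b by simp
  qed
  fix j :: nat assume j: "j \<ge> 1"
  then have "j = (j - 1) + 1" by simp
  then have "f j = real ((j-1)+1) * ell + c" using claim[of "j-1"] by metis
  then show "f j = real j * (f 2 - f 1) + (2 * f 1 - f 2)" using j by (simp add: ell_def c_def)
qed

lemma ia_facts:
  assumes "isometric_action G S d act"
  shows "\<And>g x. g \<in> carrier G \<Longrightarrow> x \<in> S \<Longrightarrow> act g x \<in> S"
    and "\<And>x. x \<in> S \<Longrightarrow> act \<one>\<^bsub>G\<^esub> x = x"
    and "\<And>g h x. g \<in> carrier G \<Longrightarrow> h \<in> carrier G \<Longrightarrow> x \<in> S \<Longrightarrow> act (g \<otimes>\<^bsub>G\<^esub> h) x = act g (act h x)"
    and "\<And>g x y. g \<in> carrier G \<Longrightarrow> x \<in> S \<Longrightarrow> y \<in> S \<Longrightarrow> d (act g x) (act g y) = d x y"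
  using assms unfolding isometric_action_def by blast+

context monoid
begin

lemma pow1: "w \<in> carrier G \<Longrightarrow> w [^] (1::nat) = w"
  using nat_pow_Suc[of w 0] by simp

lemma act_pow_add:
  assumes A: "isometric_action G S d act" and w: "w \<in> carrier G" and y: "y \<in> S"
  shows "act (w [^] (i + j :: nat)) y = act (w [^] i) (act (w [^] j) y)"
proof -
  have "w [^] (i + j) = w [^] i \<otimes> w [^] j" using nat_pow_mult[OF w] by simp
  then show ?thesis using ia_facts(3)[OF A nat_pow_closed[OF w] nat_pow_closed[OF w] y] by simp
qed

lemma act_pow_S:
  assumes A: "isometric_action G S d act" and w: "w \<in> carrier G" and y: "y \<in> S"
  shows "act (w [^] (i::nat)) y \<in> S"
  by (rule ia_facts(1)[OF A nat_pow_closed[OF w] y])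

lemma act_pow0:
  assumes A: "isometric_action G S d act" and y: "y \<in> S"
  shows "act (w [^] (0::nat)) y = y"
  using ia_facts(2)[OF A y] by simp

lemma dist_pow:
  assumes A: "isometric_action G S d act" and w: "w \<in> carrier G" and y: "y \<in> S" and ij: "i \<le> j"
  shows "d (act (w [^] (i::nat)) y) (act (w [^] j) y) = d y (act (w [^] (j - i)) y)"
proof -
  have "act (w [^] j) y = act (w [^] i) (act (w [^] (j - i)) y)"
    using act_pow_add[OF A w y, of i "j - i"] ij by simp
  moreover have "act (w [^] i) y = act (w [^] i) y" ..
  ultimately show ?thesis
    using ia_facts(4)[OF A nat_pow_closed[OF w] y act_pow_S[OF A w y]] by simp
qed

lemma fix_pow:
  assumes A: "isometric_action G S d act" and u: "u \<in> carrier G" and m: "m \<in> S" and f: "act u m = m"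
  shows "act (u [^] (n::nat)) m = m"
proof (induction n)
  case 0 then show ?case using act_pow0[OF A m] by simp
next
  case (Suc n)
  have "act (u [^] Suc n) m = act (u [^] n) (act u m)"
    using ia_facts(3)[OF A nat_pow_closed[OF u] u m] by simp
  then show ?case using f Suc.IH by simp
qed

lemma fix_bound:
  assumes M: "Metric_space S d" and A: "isometric_action G S d act" and v: "v \<in> carrier G"
    and m: "m \<in> S" and y: "y \<in> S" and f: "act v m = m"
  shows "d y (act v y) \<le> 2 * d y m"
proof -
  have vy: "act v y \<in> S" by (rule ia_facts(1)[OF A v y])
  have "d y (act v y) \<le> d y m + d m (act v y)" by (rule Metric_space.triangle[OF M y m vy])
  also have "d m (act v y) = d (act v m) (act v y)" using f by simp
  also have "\<dots> = d m y" by (rule ia_facts(4)[OF A v m y])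
  also have "d m y = d y m" by (rule Metric_space.commute[OF M])
  finally show ?thesis by simp
qed

lemma L1:
  assumes R: "R_tree S d" and A: "isometric_action G S d act" and w: "w \<in> carrier G" and y: "y \<in> S"
    and le: "d y (act (w [^] (2::nat)) y) \<le> d y (act (w [^] (1::nat)) y)"
  shows "\<exists>m\<in>S. act w m = m \<and> d y m = d y (act (w [^] (1::nat)) y) / 2"
proof -
  have M: "Metric_space S d" using R by (simp add: R_tree_def)
  interpret M: Metric_space S d by (rule M)
  define w1 where "w1 = act w y"
  define w2 where "w2 = act w w1"
  have w1S: "w1 \<in> S" unfolding w1_def by (rule ia_facts(1)[OF A w y])
  have w2S: "w2 \<in> S" unfolding w2_def by (rule ia_facts(1)[OF A w w1S])
  have p2: "act (w [^] (2::nat)) y = w2"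
  proof -
    have "w [^] (2::nat) = w [^] (1::nat) \<otimes> w" using nat_pow_Suc[of w 1] by (simp add: numeral_2_eq_2)
    then have "w [^] (2::nat) = w \<otimes> w" using pow1[OF w] by simp
    then show ?thesis using ia_facts(3)[OF A w w y] by (simp add: w1_def w2_def)
  qed
  have p1: "act (w [^] (1::nat)) y = w1" using pow1[OF w] by (simp add: w1_def)
  define a where "a = d y w1"
  have b: "d y w2 \<le> a" using le unfolding p1 p2 a_def .
  have a0: "0 \<le> a" by (simp add: a_def)
  obtain m where m: "m \<in> segment S d y w1" "d y m = a / 2"
    using pt_exists[OF R y w1S, of "a/2"] a0 unfolding a_def by auto
  have mS: "m \<in> S" and mm: "d y m + d m w1 = a" using m(1) by (auto simp: segment_def a_def)
  have dmw1: "d m w1 = a/2" using mm m(2) by simp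
  define um where "um = act w m"
  have umS: "um \<in> S" unfolding um_def by (rule ia_facts(1)[OF A w mS])
  have d1: "d w1 um = a/2" unfolding w1_def um_def using ia_facts(4)[OF A w y mS] m(2) by simp
  have d2: "d um w2 = a/2" unfolding w2_def um_def using ia_facts(4)[OF A w mS w1S] dmw1 by simp
  have d3: "d w1 w2 = a" unfolding w2_def w1_def using ia_facts(4)[OF A w y w1S] by (simp add: a_def w1_def)
  have c1: "d w1 y = a" using M.commute[of w1 y] by (simp add: a_def)
  have c2: "d m y = a/2" using M.commute[of m y] m(2) by simp
  have c3: "d w1 m = a/2" using M.commute[of w1 m] dmw1 by simp
  have c4: "d w2 um = a/2" using M.commute[of w2 um] d2 by simp
  have i2: "d y um + d w1 w2 \<le> max (d y w2 + d w1 um) (d w2 um + d w1 y)"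
    by (rule four_point[OF R w1S y w2S umS])
  have "d y um + a \<le> max (d y w2 + a/2) (a/2 + a)" using i2 d3 d1 c4 c1 by simp
  then have yum: "d y um \<le> a/2" using b by (simp add: le_max_iff_disj)
  have i1: "d m um + d w1 y \<le> max (d m y + d w1 um) (d y um + d w1 m)"
    by (rule four_point[OF R w1S mS y umS])
  have "d m um + a \<le> max (a/2 + a/2) (d y um + a/2)" using i1 c1 c2 d1 c3 by simp
  then have "d m um \<le> 0" using yum by (simp add: le_max_iff_disj)
  then have "d m um = 0" using M.nonneg[of m um] by simp
  then have "m = um" using M.zero[OF mS umS] by simp
  then have fx: "act w m = m" unfolding um_def by simp
  have "d y m = d y (act (w [^] (1::nat)) y) / 2" using m(2) p1 by (simp add: a_def)
  then show ?thesis using mS fx by blast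
qed

lemma L2:
  assumes R: "R_tree S d" and A: "isometric_action G S d act" and w: "w \<in> carrier G" and y: "y \<in> S"
    and gt: "d y (act (w [^] (2::nat)) y) > d y (act (w [^] (1::nat)) y)"
  shows "\<And>j. j \<ge> 1 \<Longrightarrow> d y (act (w [^] (j::nat)) y) =
      real j * (d y (act (w [^] (2::nat)) y) - d y (act (w [^] (1::nat)) y)) + (2 * d y (act (w [^] (1::nat)) y) - d y (act (w [^] (2::nat)) y))"
proof -
  have M: "Metric_space S d" using R by (simp add: R_tree_def)
  interpret M: Metric_space S d by (rule M)
  define f where "f = (\<lambda>n::nat. d y (act (w [^] n) y))"
  define Y where "Y = (\<lambda>n::nat. act (w [^] n) y)"
  have YS: "\<And>n. Y n \<in> S" unfolding Y_def by (rule act_pow_S[OF A w y])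
  have Y0: "Y 0 = y" unfolding Y_def by (rule act_pow0[OF A y])
  have dY: "\<And>i j. i \<le> j \<Longrightarrow> d (Y i) (Y j) = f (j - i)" unfolding Y_def f_def by (rule dist_pow[OF A w y])
  have rec: "f (j+1) + f (j-1) = 2 * f j" if j: "j \<ge> 1" and fj: "f j > f 1" for j
  proof -
    have e1: "d (Y 0) (Y (j+1)) = f (j+1)" using dY[of 0 "j+1"] by simp
    have e2: "d (Y 1) (Y j) = f (j-1)" using dY[of 1 j] j by simp
    have e3: "d (Y 0) (Y j) = f j" using dY[of 0 j] by simp
    have e4: "d (Y 1) (Y (j+1)) = f j" using dY[of 1 "j+1"] by simp
    have e5: "d (Y j) (Y (j+1)) = f 1" using dY[of j "j+1"] by simp
    have e6: "d (Y 1) (Y 0) = f 1" using dY[of 0 1] M.commute[of "Y 1" "Y 0"] by simp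
    have e7: "d (Y (j+1)) (Y j) = f 1" using e5 M.commute[of "Y (j+1)" "Y j"] by simp
    have i1: "d (Y 0) (Y (j+1)) + d (Y 1) (Y j) \<le> max (d (Y 0) (Y j) + d (Y 1) (Y (j+1))) (d (Y j) (Y (j+1)) + d (Y 1) (Y 0))"
      by (rule four_point[OF R YS YS YS YS])
    have i2: "d (Y 0) (Y j) + d (Y 1) (Y (j+1)) \<le> max (d (Y 0) (Y (j+1)) + d (Y 1) (Y j)) (d (Y (j+1)) (Y j) + d (Y 1) (Y 0))"
      by (rule four_point[OF R YS YS YS YS])
    have a1: "f (j+1) + f (j-1) \<le> max (f j + f j) (f 1 + f 1)" using i1 unfolding e1 e2 e3 e4 e5 e6 .
    have a2: "f j + f j \<le> max (f (j+1) + f (j-1)) (f 1 + f 1)" using i2 unfolding e1 e2 e3 e4 e7 e6 .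
    have "max (f j + f j) (f 1 + f 1) = f j + f j" using fj by simp
    then have "f (j+1) + f (j-1) \<le> f j + f j" using a1 by simp
    moreover have "f j + f j \<le> f (j+1) + f (j-1)" using a2 fj by (simp add: le_max_iff_disj)
    ultimately show ?thesis by simp
  qed
  have gt': "f 2 > f 1" using gt by (simp add: f_def)
  fix j :: nat assume j: "j \<ge> 1"
  show "d y (act (w [^] j) y) = real j * (d y (act (w [^] (2::nat)) y) - d y (act (w [^] (1::nat)) y)) + (2 * d y (act (w [^] (1::nat)) y) - d y (act (w [^] (2::nat)) y))"
    using lin_rec[of f, OF gt' rec j] by (simp add: f_def)
qed

end



context monoid
begin

lemma Tn_key:
  assumes R: "R_tree S d" and A: "isometric_action G S d act" and g: "g \<in> carrier G"
    and l: "l \<ge> 1" and k: "k \<ge> 1" and y: "y \<in> S"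
    and tame: "\<And>n::nat. n \<ge> 1 \<Longrightarrow> Fix S act (g [^] n) \<subseteq> Fix S act (g [^] k)"
  shows "d y (act (g [^] (k::nat)) y) \<le> real k * d y (act (g [^] (l::nat)) y)"
proof -
  have M: "Metric_space S d" using R by (simp add: R_tree_def)
  interpret M: Metric_space S d by (rule M)
  define h where "h = g [^] l"
  define u where "u = g [^] k"
  have hC: "h \<in> carrier G" unfolding h_def by (rule nat_pow_closed[OF g])
  have uC: "u \<in> carrier G" unfolding u_def by (rule nat_pow_closed[OF g])
  have hp: "\<And>j::nat. h [^] j = g [^] (l * j)" unfolding h_def by (rule nat_pow_pow[OF g])
  have up: "\<And>j::nat. u [^] j = g [^] (k * j)" unfolding u_def by (rule nat_pow_pow[OF g])
  define F where "F = (\<lambda>j::nat. d y (act (h [^] j) y))"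
  define Fu where "Fu = (\<lambda>j::nat. d y (act (u [^] j) y))"
  have F1: "F 1 = d y (act (g [^] l) y)" unfolding F_def using pow1[OF hC] by (simp add: h_def)
  have Fu1: "Fu 1 = d y (act (g [^] k) y)" unfolding Fu_def using pow1[OF uC] by (simp add: u_def)
  have F1nn: "0 \<le> F 1" by (simp add: F_def)
  have kF: "1 * F 1 \<le> real k * F 1" by (rule mult_right_mono) (use k F1nn in auto)
  have cross: "\<And>j::nat. Fu (l * j) = F (k * j)"
  proof -
    fix j :: nat
    have "u [^] (l * j) = h [^] (k * j)" unfolding hp up by (simp add: mult.left_commute)
    then show "Fu (l * j) = F (k * j)" by (simp add: F_def Fu_def)
  qed
  show ?thesis
  proof (cases "F 2 \<le> F 1")
    case True
    have le: "d y (act (h [^] (2::nat)) y) \<le> d y (act (h [^] (1::nat)) y)" using True by (simp add: F_def)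
    obtain mm where mS: "mm \<in> S" and fx: "act h mm = mm" and dm: "d y mm = d y (act (h [^] (1::nat)) y) / 2"
      using L1[OF R A hC y le] by blast
    have "mm \<in> Fix S act (g [^] l)" using mS fx by (simp add: Fix_def h_def)
    then have "mm \<in> Fix S act (g [^] k)" using tame[OF l] by blast
    then have fxk: "act (g [^] k) mm = mm" by (simp add: Fix_def)
    have "d y (act (g [^] k) y) \<le> 2 * d y mm" by (rule fix_bound[OF M A nat_pow_closed[OF g] mS y fxk])
    also have "\<dots> = F 1" using dm by (simp add: F_def)
    finally show ?thesis using kF F1 by simp
  next
    case False
    have gt: "d y (act (h [^] (2::nat)) y) > d y (act (h [^] (1::nat)) y)" using False by (simp add: F_def)
    define ell where "ell = F 2 - F 1"
    define c where "c = 2 * F 1 - F 2"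
    have ellp: "ell > 0" using False by (simp add: ell_def)
    have Flin: "\<And>j. j \<ge> 1 \<Longrightarrow> F j = real j * ell + c"
      unfolding ell_def c_def F_def by (rule L2[OF R A hC y gt])
    have "F 2 \<le> 2 * F 1"
    proof -
      have Y1: "act (h [^] (1::nat)) y \<in> S" by (rule act_pow_S[OF A hC y])
      have Y2: "act (h [^] (2::nat)) y \<in> S" by (rule act_pow_S[OF A hC y])
      have "d y (act (h [^] (2::nat)) y) \<le> d y (act (h [^] (1::nat)) y) + d (act (h [^] (1::nat)) y) (act (h [^] (2::nat)) y)"
        by (rule M.triangle[OF y Y1 Y2])
      moreover have "d (act (h [^] (1::nat)) y) (act (h [^] (2::nat)) y) = d y (act (h [^] (1::nat)) y)"
        using dist_pow[OF A hC y, of 1 2] by simp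
      ultimately show ?thesis by (simp add: F_def)
    qed
    then have c0: "c \<ge> 0" by (simp add: c_def)
    show ?thesis
    proof (cases "Fu 2 \<le> Fu 1")
      case True
      have le: "d y (act (u [^] (2::nat)) y) \<le> d y (act (u [^] (1::nat)) y)" using True by (simp add: Fu_def)
      obtain mm where mS: "mm \<in> S" and fx: "act u mm = mm"
        using L1[OF R A uC y le] by blast
      define B where "B = 2 * d y mm"
      have bnd: "\<And>j. Fu (l * j) \<le> B"
      proof -
        fix j :: nat
        have "act (u [^] (l * j)) mm = mm" by (rule fix_pow[OF A uC mS fx])
        then show "Fu (l * j) \<le> B" unfolding Fu_def B_def by (rule fix_bound[OF M A nat_pow_closed[OF uC] mS y])
      qed
      define j0 where "j0 = nat \<lceil>B / ell\<rceil> + 1"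
      have j0: "j0 \<ge> 1" by (simp add: j0_def)
      have "B / ell \<le> real (nat \<lceil>B / ell\<rceil>)" by linarith
      then have "B / ell < real j0" by (simp add: j0_def)
      then have Bl: "B < real j0 * ell" using ellp by (simp add: pos_divide_less_eq)
      have "1 * j0 \<le> k * j0" using k by (rule mult_right_mono) simp
      then have kj: "real j0 \<le> real (k * j0)" by (simp only: of_nat_le_iff mult_1)
      have "real j0 * ell \<le> real (k * j0) * ell" by (rule mult_right_mono[OF kj]) (use ellp in simp)
      moreover have "F (k * j0) = real (k * j0) * ell + c" by (rule Flin) (use k j0 in simp)
      ultimately have "B < F (k * j0)" using Bl c0 by linarith
      moreover have "F (k * j0) \<le> B" using bnd[of j0] cross[of j0] by simp
      ultimately show ?thesis by simp
    next
      case False2: False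
      have gt2: "d y (act (u [^] (2::nat)) y) > d y (act (u [^] (1::nat)) y)" using False2 by (simp add: Fu_def)
      define ell' where "ell' = Fu 2 - Fu 1"
      define c' where "c' = 2 * Fu 1 - Fu 2"
      have ellp': "ell' > 0" using False2 by (simp add: ell'_def)
      have Fulin: "\<And>j. j \<ge> 1 \<Longrightarrow> Fu j = real j * ell' + c'"
        unfolding ell'_def c'_def Fu_def by (rule L2[OF R A uC y gt2])
      have a1: "Fu (l * 1) = F (k * 1)" by (rule cross)
      have a2: "Fu (l * 2) = F (k * 2)" by (rule cross)
      have b1: "Fu (l * 1) = real l * ell' + c'" using Fulin[of "l*1"] l by simp
      have b2: "Fu (l * 2) = 2 * (real l * ell') + c'" using Fulin[of "l*2"] l by simp
      have b3: "F (k * 1) = real k * ell + c" using Flin[of "k*1"] k by simp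
      have b4: "F (k * 2) = 2 * (real k * ell) + c" using Flin[of "k*2"] k by simp
      have e: "real l * ell' = real k * ell" and ec: "c' = c" using a1 a2 b1 b2 b3 b4 by linarith+
      have "1 * ell' \<le> real l * ell'" by (rule mult_right_mono) (use l ellp' in auto)
      moreover have "1 * c \<le> real k * c" by (rule mult_right_mono) (use k c0 in auto)
      moreover have "Fu 1 = ell' + c'" using Fulin[of 1] by simp
      moreover have "F 1 = ell + c" using Flin[of 1] by simp
      ultimately have "Fu 1 \<le> real k * F 1" using e ec by (simp add: algebra_simps)
      then show ?thesis using F1 Fu1 by simp
    qed
  qed
qed

end



theorem proposition6p4:
  fixes G :: "'g monoid" and Gs :: "nat \<Rightarrow> 'g set" and m N k :: nat and x :: "nat \<Rightarrow> 'g"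
    and S :: "'a set" and d :: "'a \<Rightarrow> 'a \<Rightarrow> real" and act :: "'g \<Rightarrow> 'a \<Rightarrow> 'a"
    and Sn :: "nat \<Rightarrow> 'b set" and dn :: "nat \<Rightarrow> 'b \<Rightarrow> 'b \<Rightarrow> real" and actn :: "nat \<Rightarrow> 'g \<Rightarrow> 'b \<Rightarrow> 'b"
  assumes "free_product_decomp G Gs m x N"
    and "countable (carrier G)"
    and "k \<ge> 1"
    and "small_minimal_GF_tree G Gs m S d act"
    and "\<forall>n. k_tame G Gs m k (Sn n) (dn n) (actn n)"
    and "eGH_converges G Sn dn actn S d act"
  shows "k_tame G Gs m k S d act"
proof -
  have grp: "group G" using assms(1) by (simp add: free_product_decomp_def)
  then have Gm: "monoid G" by (rule group.is_monoid)
  have RT: "R_tree S d" and AT: "isometric_action G S d act"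
    using assms(4) by (simp_all add: small_minimal_GF_tree_def GF_tree_def)
  have MT: "Metric_space S d" using RT by (simp add: R_tree_def)
  have k1: "k \<ge> 1" by (rule assms(3))
  have main: "p \<in> Fix S act (g [^]\<^bsub>G\<^esub> k)"
    if g: "g \<in> carrier G" and np: "\<not> peripheral_elem G Gs m g" and l: "l \<ge> 1"
      and p: "p \<in> Fix S act (g [^]\<^bsub>G\<^esub> (l::nat))" for g p l
  proof -
    have pS: "p \<in> S" and fxl: "act (g [^]\<^bsub>G\<^esub> l) p = p" using p by (simp_all add: Fix_def)
    have gk: "g [^]\<^bsub>G\<^esub> k \<in> carrier G" by (rule monoid.nat_pow_closed[OF Gm g])
    have gl: "g [^]\<^bsub>G\<^esub> l \<in> carrier G" by (rule monoid.nat_pow_closed[OF Gm g])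
    have one: "\<one>\<^bsub>G\<^esub> \<in> carrier G" by (rule monoid.one_closed[OF Gm])
    show ?thesis
    proof (rule ccontr)
      assume nf: "p \<notin> Fix S act (g [^]\<^bsub>G\<^esub> k)"
      have pkS: "act (g [^]\<^bsub>G\<^esub> k) p \<in> S" by (rule ia_facts(1)[OF AT gk pS])
      have ne: "act (g [^]\<^bsub>G\<^esub> k) p \<noteq> p" using nf pS by (simp add: Fix_def)
      define \<delta> where "\<delta> = d p (act (g [^]\<^bsub>G\<^esub> k) p)"
      have "\<delta> \<noteq> 0" unfolding \<delta>_def using Metric_space.zero[OF MT pS pkS] ne by auto
      then have dp: "\<delta> > 0" using Metric_space.nonneg[OF MT, of p "act (g [^]\<^bsub>G\<^esub> k) p"]
        unfolding \<delta>_def by (simp add: less_le)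
      define \<epsilon> where "\<epsilon> = \<delta> / (real k + 2)"
      have ep: "\<epsilon> > 0" using dp by (simp add: \<epsilon>_def)
      have de: "\<delta> = (real k + 2) * \<epsilon>" unfolding \<epsilon>_def by simp
      define P where "P = {\<one>\<^bsub>G\<^esub>, g [^]\<^bsub>G\<^esub> l, g [^]\<^bsub>G\<^esub> k}"
      have Pfin: "finite P" and PC: "P \<subseteq> carrier G" using one gk gl by (simp_all add: P_def)
      have Kfin: "finite {p}" and KS: "{p} \<subseteq> S" using pS by simp_all
      have conv: "\<forall>K P \<epsilon>. finite K \<and> K \<subseteq> S \<and> finite P \<and> P \<subseteq> carrier G \<and> \<epsilon> > 0 \<longrightarrow>
        (\<exists>n0. \<forall>n\<ge>n0. \<exists>Kn R. finite Kn \<and> Kn \<subseteq> Sn n \<and> R \<subseteq> K \<times> Kn \<and> fst ` R = K \<and> snd ` R = Kn \<and>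
           (\<forall>(x, x')\<in>R. \<forall>(y, y')\<in>R. \<forall>g\<in>P. \<forall>h\<in>P.
              \<bar>d (act g x) (act h y) - dn n (actn n g x') (actn n h y')\<bar> < \<epsilon>))"
        using assms(6) by (simp only: eGH_converges_def)
      have "\<exists>n0. \<forall>n\<ge>n0. \<exists>Kn R. finite Kn \<and> Kn \<subseteq> Sn n \<and> R \<subseteq> {p} \<times> Kn \<and> fst ` R = {p} \<and> snd ` R = Kn \<and>
           (\<forall>(x, x')\<in>R. \<forall>(y, y')\<in>R. \<forall>g\<in>P. \<forall>h\<in>P.
              \<bar>d (act g x) (act h y) - dn n (actn n g x') (actn n h y')\<bar> < \<epsilon>)"
        using conv[rule_format, of "{p}" P \<epsilon>] Kfin KS Pfin PC ep by blast
      then obtain n0 where n0: "\<forall>n\<ge>n0. \<exists>Kn R. finite Kn \<and> Kn \<subseteq> Sn n \<and> R \<subseteq> {p} \<times> Kn \<and> fst ` R = {p} \<and> snd ` R = Kn \<and>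
           (\<forall>(x, x')\<in>R. \<forall>(y, y')\<in>R. \<forall>g\<in>P. \<forall>h\<in>P.
              \<bar>d (act g x) (act h y) - dn n (actn n g x') (actn n h y')\<bar> < \<epsilon>)" by (rule exE)
      have "\<exists>Kn R. finite Kn \<and> Kn \<subseteq> Sn n0 \<and> R \<subseteq> {p} \<times> Kn \<and> fst ` R = {p} \<and> snd ` R = Kn \<and>
           (\<forall>(x, x')\<in>R. \<forall>(y, y')\<in>R. \<forall>g\<in>P. \<forall>h\<in>P.
              \<bar>d (act g x) (act h y) - dn n0 (actn n0 g x') (actn n0 h y')\<bar> < \<epsilon>)"
        using n0 by simp
      then obtain Kn Rr where Kn: "Kn \<subseteq> Sn n0" and fR: "fst ` Rr = {p}" and sR: "snd ` Rr = Kn"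
        and H: "\<forall>(x, x')\<in>Rr. \<forall>(y, y')\<in>Rr. \<forall>g\<in>P. \<forall>h\<in>P.
              \<bar>d (act g x) (act h y) - dn n0 (actn n0 g x') (actn n0 h y')\<bar> < \<epsilon>" by blast
      have "p \<in> fst ` Rr" using fR by simp
      then obtain pr where pr: "pr \<in> Rr" and fpr: "fst pr = p" by blast
      define q where "q = snd pr"
      have pq: "(p, q) \<in> Rr" using pr fpr unfolding q_def by (metis prod.collapse)
      have qS: "q \<in> Sn n0" using pr sR Kn unfolding q_def by blast
      have H1: "\<forall>(y, y')\<in>Rr. \<forall>g\<in>P. \<forall>h\<in>P.
              \<bar>d (act g p) (act h y) - dn n0 (actn n0 g q) (actn n0 h y')\<bar> < \<epsilon>"
        using bspec[OF H pq] by (simp only: prod.case)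
      have H2: "\<forall>g\<in>P. \<forall>h\<in>P. \<bar>d (act g p) (act h p) - dn n0 (actn n0 g q) (actn n0 h q)\<bar> < \<epsilon>"
        using bspec[OF H1 pq] by (simp only: prod.case)
      have oP: "\<one>\<^bsub>G\<^esub> \<in> P" and lP: "g [^]\<^bsub>G\<^esub> l \<in> P" and kP: "g [^]\<^bsub>G\<^esub> k \<in> P"
        by (simp_all add: P_def)
      have i1: "\<bar>d (act \<one>\<^bsub>G\<^esub> p) (act (g [^]\<^bsub>G\<^esub> l) p) - dn n0 (actn n0 \<one>\<^bsub>G\<^esub> q) (actn n0 (g [^]\<^bsub>G\<^esub> l) q)\<bar> < \<epsilon>"
        using H2 oP lP by blast
      have i2: "\<bar>d (act \<one>\<^bsub>G\<^esub> p) (act (g [^]\<^bsub>G\<^esub> k) p) - dn n0 (actn n0 \<one>\<^bsub>G\<^esub> q) (actn n0 (g [^]\<^bsub>G\<^esub> k) q)\<bar> < \<epsilon>"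
        using H2 oP kP by blast
      have kt: "k_tame G Gs m k (Sn n0) (dn n0) (actn n0)" using assms(5) by simp
      have Rn: "R_tree (Sn n0) (dn n0)" and An: "isometric_action G (Sn n0) (dn n0) (actn n0)"
        using kt by (simp_all add: k_tame_def small_minimal_GF_tree_def GF_tree_def)
      have tameG: "\<forall>g\<in>carrier G. \<not> peripheral_elem G Gs m g \<longrightarrow>
        (\<forall>l::nat. l \<ge> 1 \<longrightarrow> Fix (Sn n0) (actn n0) (g [^]\<^bsub>G\<^esub> l) \<subseteq> Fix (Sn n0) (actn n0) (g [^]\<^bsub>G\<^esub> k))"
        using kt by (simp add: k_tame_def)
      have tame: "\<And>n::nat. n \<ge> 1 \<Longrightarrow> Fix (Sn n0) (actn n0) (g [^]\<^bsub>G\<^esub> n) \<subseteq> Fix (Sn n0) (actn n0) (g [^]\<^bsub>G\<^esub> k)"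
        using tameG g np by blast
      have key: "dn n0 q (actn n0 (g [^]\<^bsub>G\<^esub> k) q) \<le> real k * dn n0 q (actn n0 (g [^]\<^bsub>G\<^esub> l) q)"
        by (rule monoid.Tn_key[OF Gm Rn An g l k1 qS tame])
      have a1: "act \<one>\<^bsub>G\<^esub> p = p" by (rule ia_facts(2)[OF AT pS])
      have a2: "actn n0 \<one>\<^bsub>G\<^esub> q = q" by (rule ia_facts(2)[OF An qS])
      have dpp: "d p p = 0" using Metric_space.zero[OF MT pS pS] by simp
      have s1: "dn n0 q (actn n0 (g [^]\<^bsub>G\<^esub> l) q) < \<epsilon>" using i1 unfolding a1 a2 fxl dpp by simp
      have s2: "\<delta> < dn n0 q (actn n0 (g [^]\<^bsub>G\<^esub> k) q) + \<epsilon>" using i2 unfolding a1 a2 \<delta>_def by simp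
      have "real k * dn n0 q (actn n0 (g [^]\<^bsub>G\<^esub> l) q) \<le> real k * \<epsilon>"
        using s1 by (intro mult_left_mono) auto
      then have "\<delta> < real k * \<epsilon> + \<epsilon>" using s2 key by linarith
      then show False using de ep by (simp add: algebra_simps)
    qed
  qed
  show ?thesis unfolding k_tame_def
  proof (intro conjI ballI impI allI subsetI)
    show "small_minimal_GF_tree G Gs m S d act" by (rule assms(4))
  next
    fix g l p assume "g \<in> carrier G" "\<not> peripheral_elem G Gs m g" "(1::nat) \<le> l" "p \<in> Fix S act (g [^]\<^bsub>G\<^esub> l)"
    then show "p \<in> Fix S act (g [^]\<^bsub>G\<^esub> k)" by (rule main)
  qed
qed


end
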